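(* Let $(G,\cdot)$ be a two-step nilpotent group, $n$ a nonzero integer, and define $a\circ b=a\cdot a^{-n}ba^{n}$ for $a,b\in G$. Then $(G,\cdot,\circ)$ is a $\lambda$-homomorphic skew left brace; that is, the map $\lambda\colon(G,\cdot)\to\operatorname{Aut}(G,\cdot)$, $\lambda_a(b)=a^{-1}\cdot(a\circ b)=a^{-n}ba^{n}$, is a group homomorphism.
   Context: A two-step nilpotent group is a group of nilpotency class at most $2$, i.e. all commutators $[a,b]=a^{-1}b^{-1}ab$ are central. A skew left brace is a triple $(G,\cdot,\circ)$ where $(G,\cdot)$ and $(G,\circ)$ are groups on the same set with $a\circ(b\cdot c)=(a\circ b)\cdot a^{-1}\cdot(a\circ c)$ for all $a,b,c$. Its $\lambda$-map is $\lambda_a(b)=a^{-1}\cdot(a\circ b)$, and it is $\lambda$-homomorphic if $\lambda\colon(G,\cdot)\to\operatorname{Aut}(G,\cdot)$ is a group homomorphism. *)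

theory Defs
  imports "HOL-Algebra.Algebra"
begin

definition commutator :: "('a, 'b) monoid_scheme \<Rightarrow> 'a \<Rightarrow> 'a \<Rightarrow> 'a" where
  "commutator G a b = inv\<^bsub>G\<^esub> a \<otimes>\<^bsub>G\<^esub> inv\<^bsub>G\<^esub> b \<otimes>\<^bsub>G\<^esub> a \<otimes>\<^bsub>G\<^esub> b"

definition two_step_nilpotent :: "('a, 'b) monoid_scheme \<Rightarrow> bool" where
  "two_step_nilpotent G \<longleftrightarrow> group G \<and>
     (\<forall>a\<in>carrier G. \<forall>b\<in>carrier G. \<forall>c\<in>carrier G.
        commutator G a b \<otimes>\<^bsub>G\<^esub> c = c \<otimes>\<^bsub>G\<^esub> commutator G a b)"

definition skew_left_brace :: "('a, 'b) monoid_scheme \<Rightarrow> ('a \<Rightarrow> 'a \<Rightarrow> 'a) \<Rightarrow> bool" where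
  "skew_left_brace G circ \<longleftrightarrow> group G \<and>
     (\<exists>e. group \<lparr>carrier = carrier G, monoid.mult = circ, one = e\<rparr>) \<and>
     (\<forall>a\<in>carrier G. \<forall>b\<in>carrier G. \<forall>c\<in>carrier G.
        circ a (b \<otimes>\<^bsub>G\<^esub> c) = circ a b \<otimes>\<^bsub>G\<^esub> inv\<^bsub>G\<^esub> a \<otimes>\<^bsub>G\<^esub> circ a c)"

definition lambda_map :: "('a, 'b) monoid_scheme \<Rightarrow> ('a \<Rightarrow> 'a \<Rightarrow> 'a) \<Rightarrow> 'a \<Rightarrow> 'a \<Rightarrow> 'a" where
  "lambda_map G circ a = (\<lambda>b\<in>carrier G. inv\<^bsub>G\<^esub> a \<otimes>\<^bsub>G\<^esub> circ a b)"

definition lambda_homomorphic_skew_brace :: "('a, 'b) monoid_scheme \<Rightarrow> ('a \<Rightarrow> 'a \<Rightarrow> 'a) \<Rightarrow> bool" where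
  "lambda_homomorphic_skew_brace G circ \<longleftrightarrow>
     skew_left_brace G circ \<and> lambda_map G circ \<in> hom G (AutoGroup G)"

end

theory Submission
  imports Defs
begin

context group
begin

definition ctr :: "'a \<Rightarrow> bool" where
  "ctr z \<longleftrightarrow> z \<in> carrier G \<and> (\<forall>c\<in>carrier G. z \<otimes> c = c \<otimes> z)"

definition eqv :: "'a \<Rightarrow> 'a \<Rightarrow> bool" where
  "eqv x y \<longleftrightarrow> x \<in> carrier G \<and> y \<in> carrier G \<and> ctr (inv x \<otimes> y)"

lemma ctr_mult: "ctr z \<Longrightarrow> ctr w \<Longrightarrow> ctr (z \<otimes> w)"
  unfolding ctr_def by (metis m_assoc m_closed)

lemma ctr_inv: assumes "ctr z" shows "ctr (inv z)"
  unfolding ctr_def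
proof (intro conjI ballI)
  show "inv z \<in> carrier G" using assms ctr_def by auto
  fix c assume c: "c \<in> carrier G"
  have z: "z \<in> carrier G" and zc: "z \<otimes> c = c \<otimes> z" using assms c ctr_def by auto
  have "inv z \<otimes> c = inv z \<otimes> (c \<otimes> z) \<otimes> inv z" using z c by (simp add: m_assoc)
  also have "\<dots> = inv z \<otimes> (z \<otimes> c) \<otimes> inv z" using zc by simp
  also have "\<dots> = c \<otimes> inv z" using z c by (simp add: m_assoc[symmetric])
  finally show "inv z \<otimes> c = c \<otimes> inv z" .
qed

lemma ctr_one: "ctr \<one>" unfolding ctr_def by simp

lemma eqv_refl: "x \<in> carrier G \<Longrightarrow> eqv x x"
  unfolding eqv_def by (simp add: ctr_one)

lemma eqv_sym: assumes "eqv x y" shows "eqv y x"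
proof -
  have x: "x \<in> carrier G" and y: "y \<in> carrier G" and c: "ctr (inv x \<otimes> y)"
    using assms eqv_def by auto
  have "inv (inv x \<otimes> y) = inv y \<otimes> x" using x y by (simp add: inv_mult_group)
  then show ?thesis using ctr_inv[OF c] x y eqv_def by auto
qed

lemma eqv_trans: assumes "eqv x y" "eqv y z" shows "eqv x z"
proof -
  have x: "x \<in> carrier G" and y: "y \<in> carrier G" and z: "z \<in> carrier G"
    and c1: "ctr (inv x \<otimes> y)" and c2: "ctr (inv y \<otimes> z)"
    using assms eqv_def by auto
  have "(inv x \<otimes> y) \<otimes> (inv y \<otimes> z) = inv x \<otimes> z" using x y z
    by (simp add: m_assoc[symmetric]) (simp add: m_assoc)
  then show ?thesis using ctr_mult[OF c1 c2] x z eqv_def by auto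
qed

lemma eqv_mult: assumes "eqv x x'" "eqv y y'" shows "eqv (x \<otimes> y) (x' \<otimes> y')"
proof -
  have x: "x \<in> carrier G" and y: "y \<in> carrier G" and x': "x' \<in> carrier G" and y': "y' \<in> carrier G"
    and c1: "ctr (inv x \<otimes> x')" and c2: "ctr (inv y \<otimes> y')"
    using assms eqv_def by auto
  define z where "z = inv x \<otimes> x'"
  have zc: "z \<otimes> inv y = inv y \<otimes> z" using c1 y ctr_def z_def by auto
  have "inv (x \<otimes> y) \<otimes> (x' \<otimes> y') = inv y \<otimes> z \<otimes> y'"
    using x y x' y' by (simp add: inv_mult_group m_assoc z_def)
  also have "\<dots> = (z \<otimes> inv y) \<otimes> y'" using zc by simp
  also have "\<dots> = z \<otimes> (inv y \<otimes> y')" using x y x' y' z_def by (simp add: m_assoc)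
  finally show ?thesis using ctr_mult[OF c1 c2] x y x' y' eqv_def z_def by auto
qed

lemma eqv_inv: assumes "eqv x x'" shows "eqv (inv x) (inv x')"
proof -
  have x: "x \<in> carrier G" and x': "x' \<in> carrier G" and c: "ctr (inv x \<otimes> x')"
    using assms eqv_def by auto
  define w where "w = inv x \<otimes> x'"
  have w: "w \<in> carrier G" using w_def x x' by simp
  have xx: "x' = x \<otimes> w" using x x' w_def by (simp add: m_assoc[symmetric])
  have "inv (inv x) \<otimes> inv x' = x \<otimes> (inv w \<otimes> inv x)" using xx x w by (simp add: inv_mult_group)
  also have "\<dots> = x \<otimes> (inv x \<otimes> inv w)" using ctr_inv[OF c] x w_def ctr_def by auto
  also have "\<dots> = inv w" using x w by (simp add: m_assoc[symmetric])
  finally show ?thesis using ctr_inv[OF c] x x' eqv_def w_def by auto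
qed

lemma eqv_pow_nat: assumes "eqv x y" shows "eqv (x [^] (m::nat)) (y [^] m)"
proof (induction m)
  case 0 then show ?case by (simp add: eqv_refl)
next
  case (Suc m) then show ?case using eqv_mult[OF Suc assms] by simp
qed

lemma eqv_pow: assumes "eqv x y" shows "eqv (x [^] (n::int)) (y [^] n)"
proof (cases "n \<ge> 0")
  case True
  then obtain m where "n = int m" by (metis nonneg_eq_int)
  then show ?thesis using eqv_pow_nat[OF assms] by (simp add: int_pow_int)
next
  case False
  then obtain m where "n = - int m" by (metis le_cases neg_0_le_iff_le nonneg_eq_int minus_minus)
  moreover have "x \<in> carrier G" "y \<in> carrier G" using assms eqv_def by auto
  ultimately show ?thesis using eqv_inv[OF eqv_pow_nat[OF assms]] by (simp add: int_pow_neg_int)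
qed

lemma eqv_conj: assumes "eqv u v" "b \<in> carrier G"
  shows "inv u \<otimes> b \<otimes> u = inv v \<otimes> b \<otimes> v"
proof -
  have u: "u \<in> carrier G" and v: "v \<in> carrier G" and c: "ctr (inv u \<otimes> v)"
    using assms eqv_def by auto
  define z where "z = inv u \<otimes> v"
  have z: "z \<in> carrier G" using z_def u v by simp
  have vv: "v = u \<otimes> z" using u v z_def by (simp add: m_assoc[symmetric])
  have "inv v \<otimes> b \<otimes> v = inv z \<otimes> ((inv u \<otimes> b \<otimes> u) \<otimes> z)"
    using vv u z assms(2) by (simp add: inv_mult_group m_assoc)
  also have "\<dots> = inv z \<otimes> (z \<otimes> (inv u \<otimes> b \<otimes> u))"
    using c z_def ctr_def u assms(2) by auto
  also have "\<dots> = inv u \<otimes> b \<otimes> u" using z u assms(2) by (simp add: m_assoc[symmetric])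
  finally show ?thesis by simp
qed

lemma comm_eqv:
  assumes nil: "two_step_nilpotent G" and x: "x \<in> carrier G" and y: "y \<in> carrier G"
  shows "eqv (x \<otimes> y) (y \<otimes> x)"
proof -
  have "inv (x \<otimes> y) \<otimes> (y \<otimes> x) = commutator G y x"
    using x y by (simp add: commutator_def inv_mult_group m_assoc)
  moreover have "ctr (commutator G y x)"
    using nil x y unfolding two_step_nilpotent_def ctr_def commutator_def by auto
  ultimately show ?thesis using x y eqv_def by auto
qed

lemma pow_nat_eqv:
  assumes nil: "two_step_nilpotent G" and x: "x \<in> carrier G" and y: "y \<in> carrier G"
  shows "eqv ((x \<otimes> y) [^] (m::nat)) (x [^] m \<otimes> y [^] m)"
proof (induction m)
  case 0 then show ?case by (simp add: eqv_refl)
next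
  case (Suc m)
  have "eqv ((x \<otimes> y) [^] Suc m) ((x [^] m \<otimes> y [^] m) \<otimes> (x \<otimes> y))"
    using eqv_mult[OF Suc eqv_refl[of "x \<otimes> y"]] x y by simp
  moreover have "(x [^] m \<otimes> y [^] m) \<otimes> (x \<otimes> y) = x [^] m \<otimes> (y [^] m \<otimes> x) \<otimes> y"
    using x y by (simp add: m_assoc)
  moreover have "eqv (x [^] m \<otimes> (y [^] m \<otimes> x) \<otimes> y) (x [^] m \<otimes> (x \<otimes> y [^] m) \<otimes> y)"
    using eqv_mult[OF eqv_mult[OF eqv_refl comm_eqv[OF nil, of "y [^] m" x]] eqv_refl] x y by simp
  moreover have "x [^] m \<otimes> (x \<otimes> y [^] m) \<otimes> y = x [^] Suc m \<otimes> y [^] Suc m"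
    using x y by (simp add: m_assoc)
  ultimately show ?case using eqv_trans by metis
qed

lemma pow_eqv:
  assumes nil: "two_step_nilpotent G" and x: "x \<in> carrier G" and y: "y \<in> carrier G"
  shows "eqv ((x \<otimes> y) [^] (n::int)) (x [^] n \<otimes> y [^] n)"
proof (cases "n \<ge> 0")
  case True
  then obtain m where "n = int m" by (metis nonneg_eq_int)
  then show ?thesis using pow_nat_eqv[OF assms] by (simp add: int_pow_int)
next
  case False
  then obtain m where n: "n = - int m" by (metis le_cases neg_0_le_iff_le nonneg_eq_int minus_minus)
  have "eqv ((x \<otimes> y) [^] n) (inv (x [^] m \<otimes> y [^] m))"
    using eqv_inv[OF pow_nat_eqv[OF assms, of m]] n x y by (simp add: int_pow_neg_int)
  moreover have "inv (x [^] m \<otimes> y [^] m) = inv (y [^] m) \<otimes> inv (x [^] m)"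
    using x y by (simp add: inv_mult_group)
  moreover have "eqv (inv (y [^] m) \<otimes> inv (x [^] m)) (inv (x [^] m) \<otimes> inv (y [^] m))"
    using comm_eqv[OF nil] x y by simp
  moreover have "inv (x [^] m) \<otimes> inv (y [^] m) = x [^] n \<otimes> y [^] n"
    using n x y by (simp add: int_pow_neg_int)
  ultimately show ?thesis using eqv_trans by metis
qed

definition L :: "int \<Rightarrow> 'a \<Rightarrow> 'a \<Rightarrow> 'a" where
  "L n a b = a [^] (- n) \<otimes> b \<otimes> a [^] n"

lemma L_comp:
  assumes nil: "two_step_nilpotent G" and a: "a \<in> carrier G" and b: "b \<in> carrier G"
    and c: "c \<in> carrier G" and x: "eqv x (b \<otimes> a)"
  shows "L n x c = L n a (L n b c)"
proof -
  have "eqv (x [^] n) ((b \<otimes> a) [^] n)" using eqv_pow[OF x] .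
  then have e: "eqv (x [^] n) (b [^] n \<otimes> a [^] n)" using pow_eqv[OF nil b a] eqv_trans by blast
  have xc: "x \<in> carrier G" using x eqv_def by auto
  have "L n x c = inv (x [^] n) \<otimes> c \<otimes> x [^] n" using xc by (simp add: L_def int_pow_neg)
  also have "\<dots> = inv (b [^] n \<otimes> a [^] n) \<otimes> c \<otimes> (b [^] n \<otimes> a [^] n)" using eqv_conj[OF e c] .
  also have "\<dots> = L n a (L n b c)" using a b c
    by (simp add: L_def int_pow_neg inv_mult_group m_assoc)
  finally show ?thesis .
qed

lemma circ_eqv:
  assumes nil: "two_step_nilpotent G" and a: "a \<in> carrier G" and b: "b \<in> carrier G"
  shows "eqv (a \<otimes> L n a b) (a \<otimes> b)"
proof -
  have "inv (a \<otimes> b) \<otimes> (a \<otimes> L n a b) = commutator G b (a [^] n)"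
    using a b by (simp add: L_def commutator_def inv_mult_group m_assoc int_pow_neg)
       (simp add: m_assoc[symmetric])
  moreover have "ctr (commutator G b (a [^] n))"
    using nil a b unfolding two_step_nilpotent_def ctr_def commutator_def by auto
  ultimately show ?thesis using a b eqv_sym eqv_def by (auto simp: L_def)
qed

lemma L_mult: "a \<in> carrier G \<Longrightarrow> x \<in> carrier G \<Longrightarrow> y \<in> carrier G \<Longrightarrow>
   L n a (x \<otimes> y) = L n a x \<otimes> L n a y"
  by (simp add: L_def int_pow_neg m_assoc) (simp add: m_assoc[symmetric])

lemma L_closed [simp]: "a \<in> carrier G \<Longrightarrow> x \<in> carrier G \<Longrightarrow> L n a x \<in> carrier G"
  by (simp add: L_def)

lemma L_inv_cancel: "a \<in> carrier G \<Longrightarrow> x \<in> carrier G \<Longrightarrow> L n a (L (-n) a x) = x"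
  by (simp add: L_def int_pow_neg m_assoc) (simp add: m_assoc[symmetric])

lemma pow_commute: "y \<in> carrier G \<Longrightarrow> y [^] (i::int) \<otimes> y [^] (k::int) = y [^] k \<otimes> y [^] i"
  by (metis int_pow_mult add.commute)

lemma L_self_inv: assumes y: "y \<in> carrier G" shows "L n y (inv y) = inv y"
proof -
  have iy: "inv y = y [^] (-1::int)" using y by (simp add: int_pow_neg)
  have c: "inv y \<otimes> y [^] n = y [^] n \<otimes> inv y" using pow_commute[of y "-1" n] iy y by simp
  have "L n y (inv y) = y [^] (-n) \<otimes> (inv y \<otimes> y [^] n)"
    unfolding L_def using y by (simp add: m_assoc)
  also have "\<dots> = y [^] (-n) \<otimes> (y [^] n \<otimes> inv y)" using c by simp
  also have "\<dots> = inv y" using y by (simp add: m_assoc[symmetric] int_pow_neg)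
  finally show ?thesis .
qed

end

theorem proposition5p5:
  fixes G (structure) and n :: int
  assumes "group G" and "two_step_nilpotent G" and "n \<noteq> 0"
  defines "circ \<equiv> \<lambda>a b. a \<otimes> (a [^] (- n) \<otimes> b \<otimes> a [^] n)"
  shows "lambda_homomorphic_skew_brace G circ \<and>
         (\<forall>a\<in>carrier G. \<forall>b\<in>carrier G. lambda_map G circ a b = a [^] (- n) \<otimes> b \<otimes> a [^] n)"
proof -
  interpret group G by fact
  note nil = assms(2)
  have circL: "circ a b = a \<otimes> L n a b" for a b unfolding circ_def L_def ..
  have lam: "lambda_map G circ a b = L n a b" if "a \<in> carrier G" "b \<in> carrier G" for a b
    using that by (simp add: lambda_map_def circL m_assoc[symmetric])
  have ccl: "circ a b \<in> carrier G" if "a \<in> carrier G" "b \<in> carrier G" for a b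
    using that by (simp add: circL)
  have grp: "group \<lparr>carrier = carrier G, monoid.mult = circ, one = \<one>\<rparr>"
  proof (rule groupI, simp_all add: ccl)
    fix a b c assume a: "a \<in> carrier G" and b: "b \<in> carrier G" and c: "c \<in> carrier G"
    have e: "eqv (a \<otimes> L n a b) (b \<otimes> a)"
      using eqv_trans[OF circ_eqv[OF nil a b] comm_eqv[OF nil a b]] .
    show "circ (circ a b) c = circ a (circ b c)"
      using a b c L_comp[OF nil a b c e] by (simp add: circL L_mult m_assoc)
  next
    fix x assume x: "x \<in> carrier G"
    show "circ \<one> x = x" using x by (simp add: circL L_def)
    have "circ (inv x) x = \<one>" using L_self_inv[of "inv x"] x by (simp add: circL)
    then show "\<exists>y\<in>carrier G. circ y x = \<one>" using x by blast
  qed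
  have brace: "skew_left_brace G circ"
    unfolding skew_left_brace_def
  proof (intro conjI ballI)
    show "group G" by fact
    show "\<exists>e. group \<lparr>carrier = carrier G, monoid.mult = circ, one = e\<rparr>" using grp by blast
    fix a b c assume a: "a \<in> carrier G" and b: "b \<in> carrier G" and c: "c \<in> carrier G"
    show "circ a (b \<otimes> c) = circ a b \<otimes> inv a \<otimes> circ a c"
      using a b c by (simp add: circL L_mult m_assoc) (simp add: m_assoc[symmetric])
  qed
  have restr: "lambda_map G circ a = (\<lambda>b\<in>carrier G. L n a b)" if a: "a \<in> carrier G" for a
    using lam[OF a] by (auto simp: lambda_map_def)
  have inauto: "lambda_map G circ a \<in> auto G" if a: "a \<in> carrier G" for a
  proof -
    have "(\<lambda>b\<in>carrier G. L n a b) \<in> hom G G"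
      by (rule homI) (auto simp: a L_mult)
    moreover have "bij_betw (\<lambda>b\<in>carrier G. L n a b) (carrier G) (carrier G)"
    proof (rule bij_betw_byWitness[where f' = "L (-n) a"])
      show "\<forall>x\<in>carrier G. L (- n) a ((\<lambda>b\<in>carrier G. L n a b) x) = x"
        using a L_inv_cancel[of a _ "-n"] by simp
      show "\<forall>x\<in>carrier G. (\<lambda>b\<in>carrier G. L n a b) (L (- n) a x) = x"
        using a L_inv_cancel[of a _ n] by simp
      show "(\<lambda>b\<in>carrier G. L n a b) ` carrier G \<subseteq> carrier G" using a by auto
      show "L (- n) a ` carrier G \<subseteq> carrier G" using a by auto
    qed
    ultimately show ?thesis using restr[OF a] by (simp add: auto_def Bij_def)
  qed
  have "lambda_map G circ \<in> hom G (AutoGroup G)"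
  proof (rule homI)
    fix a assume "a \<in> carrier G" then show "lambda_map G circ a \<in> carrier (AutoGroup G)"
      using inauto by (simp add: AutoGroup_def BijGroup_def)
  next
    fix a b assume a: "a \<in> carrier G" and b: "b \<in> carrier G"
    have ab: "a \<otimes> b \<in> carrier G" using a b by simp
    have bij: "lambda_map G circ a \<in> Bij (carrier G)" "lambda_map G circ b \<in> Bij (carrier G)"
      using inauto a b by (auto simp: auto_def)
    show "lambda_map G circ (a \<otimes> b) = lambda_map G circ a \<otimes>\<^bsub>AutoGroup G\<^esub> lambda_map G circ b"
      unfolding restr[OF ab] using bij
      by (auto simp: AutoGroup_def BijGroup_def restr[OF a] restr[OF b] compose_def
             intro!: restrict_ext L_comp[OF nil a b] comm_eqv[OF nil a b] L_closed[OF b])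
  qed
  then show ?thesis using brace lam
    by (simp add: lambda_homomorphic_skew_brace_def L_def)
qed

end
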